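(* Let $(W,S)$ be a Coxeter system with $S$ finite, $\phi:\operatorname{Ad}(Q_W)\to W$ the homomorphism $e_x\mapsto x$, and $C_W=\ker\phi$. Then the central extension $1\to C_W\to\operatorname{Ad}(Q_W)\xrightarrow{\phi}W\to1$ is nontrivial (i.e. not split as a direct product $C_W\times W$); equivalently its class $u_\phi\in H^2(W,C_W)$ is nonzero.
   Context: A Coxeter system $(W,S)$: $S$ finite, $m:S\times S\to\mathbb{N}\cup\{\infty\}$ with $m(s,s)=1$, $2\le m(s,t)=m(t,s)\le\infty$ for $s\ne t$, $W=\langle s\in S\mid (st)^{m(s,t)}=1\ (m(s,t)<\infty)\rangle$. The Coxeter quandle is $Q_W=\bigcup_{w\in W}w^{-1}Sw$ with $x\ast y=yxy$, and $\operatorname{Ad}(Q_W)=\langle e_x\ (x\in Q_W)\mid e_y^{-1}e_xe_y=e_{x\ast y}\rangle$. $C_W$ is a central subgroup of $\operatorname{Ad}(Q_W)$. *)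

theory Defs
  imports "HOL-Algebra.Group" "HOL-Library.Extended_Nat"
begin

text \<open>Words over generators: (x, True) is the generator x, (x, False) its inverse.\<close>
type_synonym 'g word = "('g \<times> bool) list"

inductive pres_step :: "'g word set \<Rightarrow> 'g word \<Rightarrow> 'g word \<Rightarrow> bool" for R where
  cancel: "pres_step R (u @ v) (u @ [(x, b), (x, \<not> b)] @ v)"
| rel: "r \<in> R \<Longrightarrow> pres_step R (u @ v) (u @ r @ v)"

definition pres_eq :: "'g word set \<Rightarrow> 'g word \<Rightarrow> 'g word \<Rightarrow> bool" where
  "pres_eq R = (\<lambda>u v. pres_step R u v \<or> pres_step R v u)\<^sup>*\<^sup>*"

definition pres_class :: "'g word set \<Rightarrow> 'g word \<Rightarrow> 'g word set" where
  "pres_class R w = {w'. pres_eq R w w'}"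

definition presented_group :: "'g set \<Rightarrow> 'g word set \<Rightarrow> 'g word set monoid" where
  "presented_group X R =
     \<lparr> carrier = pres_class R ` lists (X \<times> UNIV),
       mult = (\<lambda>A B. pres_class R ((SOME a. a \<in> A) @ (SOME b. b \<in> B))),
       one = pres_class R [] \<rparr>"

definition pres_gen :: "'g word set \<Rightarrow> 'g \<Rightarrow> 'g word set" where
  "pres_gen R x = pres_class R [(x, True)]"

definition coxeter_matrix :: "'a set \<Rightarrow> ('a \<Rightarrow> 'a \<Rightarrow> enat) \<Rightarrow> bool" where
  "coxeter_matrix S m \<longleftrightarrow>
     (\<forall>s\<in>S. m s s = 1) \<and>
     (\<forall>s\<in>S. \<forall>t\<in>S. m s t = m t s \<and> (s \<noteq> t \<longrightarrow> 2 \<le> m s t))"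

definition coxeter_relators :: "'a set \<Rightarrow> ('a \<Rightarrow> 'a \<Rightarrow> enat) \<Rightarrow> 'a word set" where
  "coxeter_relators S m =
     {concat (replicate k [(s, True), (t, True)]) | s t k. s \<in> S \<and> t \<in> S \<and> m s t = enat k}"

definition coxeter_group :: "'a set \<Rightarrow> ('a \<Rightarrow> 'a \<Rightarrow> enat) \<Rightarrow> 'a word set monoid" where
  "coxeter_group S m = presented_group S (coxeter_relators S m)"

definition coxeter_gen :: "'a set \<Rightarrow> ('a \<Rightarrow> 'a \<Rightarrow> enat) \<Rightarrow> 'a \<Rightarrow> 'a word set" where
  "coxeter_gen S m s = pres_gen (coxeter_relators S m) s"

definition coxeter_quandle :: "'a set \<Rightarrow> ('a \<Rightarrow> 'a \<Rightarrow> enat) \<Rightarrow> 'a word set set" where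
  "coxeter_quandle S m =
     {inv\<^bsub>coxeter_group S m\<^esub> w \<otimes>\<^bsub>coxeter_group S m\<^esub> coxeter_gen S m s
        \<otimes>\<^bsub>coxeter_group S m\<^esub> w | w s. w \<in> carrier (coxeter_group S m) \<and> s \<in> S}"

definition quandle_op :: "'a set \<Rightarrow> ('a \<Rightarrow> 'a \<Rightarrow> enat) \<Rightarrow> 'a word set \<Rightarrow> 'a word set \<Rightarrow> 'a word set" where
  "quandle_op S m x y = y \<otimes>\<^bsub>coxeter_group S m\<^esub> x \<otimes>\<^bsub>coxeter_group S m\<^esub> y"

definition adjoint_relators :: "'a set \<Rightarrow> ('a \<Rightarrow> 'a \<Rightarrow> enat) \<Rightarrow> 'a word set word set" where
  "adjoint_relators S m =
     {[(y, False), (x, True), (y, True), (quandle_op S m x y, False)] | x y.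
        x \<in> coxeter_quandle S m \<and> y \<in> coxeter_quandle S m}"

definition adjoint_group :: "'a set \<Rightarrow> ('a \<Rightarrow> 'a \<Rightarrow> enat) \<Rightarrow> 'a word set word set monoid" where
  "adjoint_group S m = presented_group (coxeter_quandle S m) (adjoint_relators S m)"

definition adjoint_gen :: "'a set \<Rightarrow> ('a \<Rightarrow> 'a \<Rightarrow> enat) \<Rightarrow> 'a word set \<Rightarrow> 'a word set word set" where
  "adjoint_gen S m x = pres_gen (adjoint_relators S m) x"

end

theory Submission
  imports Defs
begin

lemma pres_eq_refl: "pres_eq R a a"
  by (simp add: pres_eq_def)

lemma pres_eq_sym: "pres_eq R a b \<Longrightarrow> pres_eq R b a"
  unfolding pres_eq_def
proof (induction rule: rtranclp_induct)
  case base thus ?case by simp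
next
  case (step y z)
  have "(\<lambda>u v. pres_step R u v \<or> pres_step R v u) z y" using step(2) by blast
  then show ?case by (rule converse_rtranclp_into_rtranclp[OF _ step.IH])
qed

lemma pres_eq_trans: "pres_eq R a b \<Longrightarrow> pres_eq R b c \<Longrightarrow> pres_eq R a c"
  unfolding pres_eq_def by (rule rtranclp_trans)

lemma pres_step_ctx: "pres_step R a b \<Longrightarrow> pres_step R (c @ a @ d) (c @ b @ d)"
proof (induction rule: pres_step.induct)
  case (cancel u v x b)
  have "pres_step R ((c @ u) @ (v @ d)) ((c @ u) @ [(x, b), (x, \<not> b)] @ (v @ d))"
    by (rule pres_step.cancel)
  thus ?case by simp
next
  case (rel r u v)
  have "pres_step R ((c @ u) @ (v @ d)) ((c @ u) @ r @ (v @ d))"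
    by (rule pres_step.rel[OF rel])
  thus ?case by simp
qed

lemma pres_eq_ctx: "pres_eq R a b \<Longrightarrow> pres_eq R (c @ a @ d) (c @ b @ d)"
  unfolding pres_eq_def
proof (induction rule: rtranclp_induct)
  case base thus ?case by simp
next
  case (step y z)
  have "(\<lambda>u v. pres_step R u v \<or> pres_step R v u) (c @ y @ d) (c @ z @ d)"
    using step(2) pres_step_ctx by blast
  then show ?case by (rule rtranclp.rtrancl_into_rtrancl[OF step.IH])
qed

lemma pres_eq_app: "pres_eq R a b \<Longrightarrow> pres_eq R c d \<Longrightarrow> pres_eq R (a @ c) (b @ d)"
  using pres_eq_ctx[of R a b "[]" c] pres_eq_ctx[of R c d b "[]"]
  by (auto intro: pres_eq_trans)

lemma pres_class_eq: "pres_class R a = pres_class R b \<longleftrightarrow> pres_eq R a b"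
proof
  assume "pres_class R a = pres_class R b"
  moreover have "a \<in> pres_class R a" by (simp add: pres_class_def pres_eq_refl)
  ultimately have "pres_eq R b a" by (simp add: pres_class_def)
  thus "pres_eq R a b" by (rule pres_eq_sym)
next
  assume h: "pres_eq R a b"
  show "pres_class R a = pres_class R b"
    unfolding pres_class_def using h pres_eq_sym pres_eq_trans by blast
qed

lemma some_class: "pres_eq R w (SOME a. a \<in> pres_class R w)"
proof -
  have "w \<in> pres_class R w" by (simp add: pres_class_def pres_eq_refl)
  hence "(SOME a. a \<in> pres_class R w) \<in> pres_class R w" by (rule someI)
  thus ?thesis by (simp add: pres_class_def)
qed

lemma pres_mult:
  "pres_class R a \<otimes>\<^bsub>presented_group X R\<^esub> pres_class R b = pres_class R (a @ b)"
  unfolding presented_group_def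
  by (simp add: pres_class_eq pres_eq_app pres_eq_sym some_class)

lemma pres_one: "\<one>\<^bsub>presented_group X R\<^esub> = pres_class R []"
  by (simp add: presented_group_def)

lemma pres_carrier: "carrier (presented_group X R) = pres_class R ` lists (X \<times> UNIV)"
  by (simp add: presented_group_def)

definition winv :: "'g word \<Rightarrow> 'g word" where
  "winv w = rev (map (\<lambda>(x, b). (x, \<not> b)) w)"

lemma winv_cancel: "pres_eq R (w @ winv w) []"
proof (induction w)
  case Nil thus ?case by (simp add: winv_def pres_eq_refl)
next
  case (Cons l w)
  obtain x b where l: "l = (x, b)" by force
  have "l # w @ winv (l # w) = [l] @ (w @ winv w) @ [(x, \<not> b)]"
    by (simp add: winv_def l)
  moreover have "pres_eq R ([l] @ (w @ winv w) @ [(x, \<not> b)]) ([l] @ [] @ [(x, \<not> b)])"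
    by (rule pres_eq_ctx[OF Cons])
  moreover have "pres_step R ([] @ []) ([] @ [(x, b), (x, \<not> b)] @ [])"
    by (rule pres_step.cancel)
  hence "pres_eq R [(x, b), (x, \<not> b)] []"
    unfolding pres_eq_def by auto
  ultimately show ?case using l by (auto intro: pres_eq_trans)
qed

lemma winv_winv: "winv (winv w) = w"
  by (induction w) (auto simp: winv_def)

lemma winv_lists: "w \<in> lists (X \<times> UNIV) \<Longrightarrow> winv w \<in> lists (X \<times> UNIV)"
  by (auto simp: winv_def)

lemma presented_group_is_group: "group (presented_group X R)"
proof (rule groupI)
  fix x y assume "x \<in> carrier (presented_group X R)" "y \<in> carrier (presented_group X R)"
  then obtain a b where "a \<in> lists (X \<times> UNIV)" "b \<in> lists (X \<times> UNIV)"
    "x = pres_class R a" "y = pres_class R b" by (auto simp: pres_carrier)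
  then show "x \<otimes>\<^bsub>presented_group X R\<^esub> y \<in> carrier (presented_group X R)"
    unfolding pres_carrier pres_mult
    by (intro image_eqI[where x="a @ b"]) (auto simp: pres_mult)
next
  show "\<one>\<^bsub>presented_group X R\<^esub> \<in> carrier (presented_group X R)"
    by (auto simp: pres_carrier pres_one)
next
  fix x y z assume "x \<in> carrier (presented_group X R)" "y \<in> carrier (presented_group X R)"
    "z \<in> carrier (presented_group X R)"
  then show "x \<otimes>\<^bsub>presented_group X R\<^esub> y \<otimes>\<^bsub>presented_group X R\<^esub> z =
       x \<otimes>\<^bsub>presented_group X R\<^esub> (y \<otimes>\<^bsub>presented_group X R\<^esub> z)"
    by (auto simp: pres_carrier pres_mult)
next
  fix x assume "x \<in> carrier (presented_group X R)"
  then show "\<one>\<^bsub>presented_group X R\<^esub> \<otimes>\<^bsub>presented_group X R\<^esub> x = x"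
    by (auto simp: pres_carrier pres_mult pres_one)
next
  fix x assume "x \<in> carrier (presented_group X R)"
  then obtain w where w: "w \<in> lists (X \<times> UNIV)" "x = pres_class R w"
    by (auto simp: pres_carrier)
  have "pres_class R (winv w) \<otimes>\<^bsub>presented_group X R\<^esub> x = \<one>\<^bsub>presented_group X R\<^esub>"
    using winv_cancel[of R "winv w"] by (simp add: w pres_mult pres_one pres_class_eq winv_winv)
  moreover have "pres_class R (winv w) \<in> carrier (presented_group X R)"
    using winv_lists[OF w(1)] by (simp add: pres_carrier)
  ultimately show "\<exists>y\<in>carrier (presented_group X R). y \<otimes>\<^bsub>presented_group X R\<^esub> x = \<one>\<^bsub>presented_group X R\<^esub>"
    by blast
qed

definition Epar :: "'g word set \<Rightarrow> bool" where
  "Epar A = odd (length (SOME a. a \<in> A))"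

definition wdeg :: "'g word \<Rightarrow> int" where
  "wdeg w = sum_list (map (\<lambda>(x, b). if b then 1 else -1) w)"

definition Ddeg :: "'g word set \<Rightarrow> int" where
  "Ddeg A = wdeg (SOME a. a \<in> A)"

lemma wdeg_app [simp]: "wdeg (a @ b) = wdeg a + wdeg b"
  by (simp add: wdeg_def)

lemma par_step: "pres_step R u v \<Longrightarrow> \<forall>r\<in>R. even (length r) \<Longrightarrow> odd (length u) = odd (length v)"
proof (induction rule: pres_step.induct)
  case (cancel u v x b)
  have "length (u @ [(x, b), (x, \<not> b)] @ v) = length (u @ v) + 2" by simp
  thus ?case by presburger
next
  case (rel r u v)
  then obtain k where "length r = 2 * k" by (meson evenE)
  moreover have "length (u @ r @ v) = length (u @ v) + length r" by simp
  ultimately show ?case by presburger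
qed

lemma par_eq: "pres_eq R u v \<Longrightarrow> \<forall>r\<in>R. even (length r) \<Longrightarrow> odd (length u) = odd (length v)"
  unfolding pres_eq_def
proof (induction rule: rtranclp_induct)
  case base thus ?case by simp
next
  case (step y z)
  from step(2) have "odd (length y) = odd (length z)"
    using par_step[OF _ step.prems] by blast
  thus ?case using step.IH[OF step.prems] by simp
qed

lemma deg_step: "pres_step R u v \<Longrightarrow> \<forall>r\<in>R. wdeg r = 0 \<Longrightarrow> wdeg u = wdeg v"
proof (induction rule: pres_step.induct)
  case (cancel u v x b)
  thus ?case by (simp add: wdeg_def)
next
  case (rel r u v)
  thus ?case by simp
qed

lemma deg_eq: "pres_eq R u v \<Longrightarrow> \<forall>r\<in>R. wdeg r = 0 \<Longrightarrow> wdeg u = wdeg v"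
  unfolding pres_eq_def
proof (induction rule: rtranclp_induct)
  case base thus ?case by simp
next
  case (step y z)
  from step(2) have "wdeg y = wdeg z"
    using deg_step[OF _ step.prems] by auto
  thus ?case using step.IH[OF step.prems] by simp
qed

lemma Epar_class: "\<forall>r\<in>R. even (length r) \<Longrightarrow> Epar (pres_class R w) = odd (length w)"
  unfolding Epar_def using par_eq[OF some_class[of R w]] by simp

lemma Ddeg_class: "\<forall>r\<in>R. wdeg r = 0 \<Longrightarrow> Ddeg (pres_class R w) = wdeg w"
  unfolding Ddeg_def using deg_eq[OF some_class[of R w]] by simp

lemma Epar_mult: "\<forall>r\<in>R. even (length r) \<Longrightarrow>
   Epar (A \<otimes>\<^bsub>presented_group X R\<^esub> B) = (Epar A \<noteq> Epar B)"
  unfolding presented_group_def by (simp add: Epar_class) (simp add: Epar_def, blast)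

lemma Ddeg_mult: "\<forall>r\<in>R. wdeg r = 0 \<Longrightarrow>
   Ddeg (A \<otimes>\<^bsub>presented_group X R\<^esub> B) = Ddeg A + Ddeg B"
  unfolding presented_group_def by (simp add: Ddeg_class) (simp add: Ddeg_def)

lemma cox_even: "\<forall>r\<in>coxeter_relators S m. even (length r)"
  by (auto simp: coxeter_relators_def length_concat sum_list_replicate)

lemma adj_deg: "\<forall>r\<in>adjoint_relators S m. wdeg r = 0"
  by (auto simp: adjoint_relators_def wdeg_def)

theorem lemma4p1:
  fixes S :: "'a set" and m :: "'a \<Rightarrow> 'a \<Rightarrow> enat"
    and \<phi> :: "'a word set word set \<Rightarrow> 'a word set"
  assumes "finite S" and "S \<noteq> {}" and "coxeter_matrix S m"
    and "\<phi> \<in> hom (adjoint_group S m) (coxeter_group S m)"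
    and "\<forall>x \<in> coxeter_quandle S m. \<phi> (adjoint_gen S m x) = x"
  shows "\<not> (\<exists>\<sigma> \<in> hom (coxeter_group S m) (adjoint_group S m).
              \<forall>w \<in> carrier (coxeter_group S m). \<phi> (\<sigma> w) = w)"
proof
  assume "\<exists>\<sigma> \<in> hom (coxeter_group S m) (adjoint_group S m).
              \<forall>w \<in> carrier (coxeter_group S m). \<phi> (\<sigma> w) = w"
  then obtain \<sigma> where \<sigma>: "\<sigma> \<in> hom (coxeter_group S m) (adjoint_group S m)"
    and sec: "\<forall>w \<in> carrier (coxeter_group S m). \<phi> (\<sigma> w) = w" by blast
  define RW where "RW = coxeter_relators S m"
  define RA where "RA = adjoint_relators S m"
  define Q where "Q = coxeter_quandle S m"
  have Weq: "coxeter_group S m = presented_group S RW"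
    by (simp add: coxeter_group_def RW_def)
  have Aeq: "adjoint_group S m = presented_group Q RA"
    by (simp add: adjoint_group_def RA_def Q_def)
  have gW: "group (presented_group S RW)" by (rule presented_group_is_group)
  have evW: "\<forall>r\<in>RW. even (length r)" unfolding RW_def by (rule cox_even)
  have dA: "\<forall>r\<in>RA. wdeg r = 0" unfolding RA_def by (rule adj_deg)
  have h\<phi>: "\<phi> \<in> hom (presented_group Q RA) (presented_group S RW)"
    using assms(4) Weq Aeq by simp
  have h\<sigma>: "\<sigma> \<in> hom (presented_group S RW) (presented_group Q RA)"
    using \<sigma> Weq Aeq by simp
  have sec': "\<And>w. w \<in> carrier (presented_group S RW) \<Longrightarrow> \<phi> (\<sigma> w) = w"
    using sec Weq by simp
  have Eone: "Epar (\<one>\<^bsub>presented_group S RW\<^esub>) = False"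
    by (simp add: pres_one Epar_class[OF evW])
  have EQ: "Epar x" if xQ: "x \<in> Q" for x
  proof -
    from xQ obtain w s where x: "x = inv\<^bsub>presented_group S RW\<^esub> w \<otimes>\<^bsub>presented_group S RW\<^esub> coxeter_gen S m s
        \<otimes>\<^bsub>presented_group S RW\<^esub> w" and w: "w \<in> carrier (presented_group S RW)" and s: "s \<in> S"
      unfolding Q_def coxeter_quandle_def Weq by blast
    have "inv\<^bsub>presented_group S RW\<^esub> w \<otimes>\<^bsub>presented_group S RW\<^esub> w = \<one>\<^bsub>presented_group S RW\<^esub>"
      using group.l_inv[OF gW w] .
    hence "Epar (inv\<^bsub>presented_group S RW\<^esub> w \<otimes>\<^bsub>presented_group S RW\<^esub> w) = False"
      using Eone by simp
    hence "Epar (inv\<^bsub>presented_group S RW\<^esub> w) = Epar w"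
      using Epar_mult[OF evW] by simp
    moreover have "Epar (coxeter_gen S m s)"
      by (simp add: coxeter_gen_def pres_gen_def RW_def[symmetric] Epar_class[OF evW])
    ultimately show ?thesis using x Epar_mult[OF evW] by simp
  qed
  define oneA where "oneA = pres_class RA []"
  have oneA_c: "oneA \<in> carrier (presented_group Q RA)"
    unfolding oneA_def pres_carrier by (intro image_eqI[where x="[]"]) auto
  have "oneA \<otimes>\<^bsub>presented_group Q RA\<^esub> oneA = oneA"
    by (simp add: oneA_def pres_mult)
  hence "\<phi> oneA = \<phi> oneA \<otimes>\<^bsub>presented_group S RW\<^esub> \<phi> oneA"
    using hom_mult[OF h\<phi> oneA_c oneA_c] by simp
  hence "Epar (\<phi> oneA) = Epar (\<phi> oneA \<otimes>\<^bsub>presented_group S RW\<^esub> \<phi> oneA)" by simp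
  hence E\<phi>one: "Epar (\<phi> oneA) = False"
    using Epar_mult[OF evW] by simp
  have genE: "Epar (\<phi> (pres_class RA [(x, b)]))" if xQ: "x \<in> Q" for x b
  proof -
    have cT: "Epar (\<phi> (pres_class RA [(x, True)]))"
      using assms(5) xQ EQ[OF xQ]
      by (simp add: Q_def adjoint_gen_def pres_gen_def RA_def[symmetric])
    show ?thesis
    proof (cases b)
      case True thus ?thesis using cT by simp
    next
      case False
      have cF_c: "pres_class RA [(x, False)] \<in> carrier (presented_group Q RA)"
        unfolding pres_carrier using xQ by (intro image_eqI[where x="[(x, False)]"]) auto
      have cT_c: "pres_class RA [(x, True)] \<in> carrier (presented_group Q RA)"
        unfolding pres_carrier using xQ by (intro image_eqI[where x="[(x, True)]"]) auto
      have "pres_step RA ([] @ []) ([] @ [(x, False), (x, \<not> False)] @ [])"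
        by (rule pres_step.cancel)
      hence "pres_eq RA [(x, False), (x, True)] []"
        unfolding pres_eq_def by auto
      hence "pres_class RA [(x, False)] \<otimes>\<^bsub>presented_group Q RA\<^esub> pres_class RA [(x, True)] = oneA"
        by (simp add: pres_mult oneA_def pres_class_eq)
      hence "\<phi> (pres_class RA [(x, False)]) \<otimes>\<^bsub>presented_group S RW\<^esub> \<phi> (pres_class RA [(x, True)]) = \<phi> oneA"
        using hom_mult[OF h\<phi> cF_c cT_c] by simp
      hence "Epar (\<phi> (pres_class RA [(x, False)]) \<otimes>\<^bsub>presented_group S RW\<^esub> \<phi> (pres_class RA [(x, True)])) = False"
        using E\<phi>one by simp
      hence "Epar (\<phi> (pres_class RA [(x, False)]))"
        using Epar_mult[OF evW] cT by simp
      thus ?thesis using False by simp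
    qed
  qed
  have link: "w \<in> lists (Q \<times> UNIV) \<Longrightarrow> Epar (\<phi> (pres_class RA w)) = odd (wdeg w)" for w
  proof (induction w)
    case Nil
    thus ?case using E\<phi>one by (simp add: oneA_def wdeg_def)
  next
    case (Cons l w)
    obtain x b where l: "l = (x, b)" by force
    have xQ: "x \<in> Q" and wl: "w \<in> lists (Q \<times> UNIV)" using Cons.prems l by auto
    have c1: "pres_class RA [l] \<in> carrier (presented_group Q RA)"
      unfolding pres_carrier using xQ l by (intro image_eqI[where x="[l]"]) auto
    have c2: "pres_class RA w \<in> carrier (presented_group Q RA)"
      unfolding pres_carrier using wl by (intro image_eqI[where x="w"]) auto
    have "pres_class RA (l # w) = pres_class RA [l] \<otimes>\<^bsub>presented_group Q RA\<^esub> pres_class RA w"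
      by (simp add: pres_mult)
    hence "\<phi> (pres_class RA (l # w)) = \<phi> (pres_class RA [l]) \<otimes>\<^bsub>presented_group S RW\<^esub> \<phi> (pres_class RA w)"
      using hom_mult[OF h\<phi> c1 c2] by simp
    hence "Epar (\<phi> (pres_class RA (l # w))) = (\<not> Epar (\<phi> (pres_class RA w)))"
      using Epar_mult[OF evW] genE[OF xQ, of b] l by simp
    moreover have "wdeg (l # w) = (if b then 1 else -1) + wdeg w"
      using wdeg_app[of "[l]" w] l by (simp add: wdeg_def)
    ultimately show ?case using Cons.IH[OF wl] by simp
  qed
  obtain s where s: "s \<in> S" using assms(2) by blast
  define gs where "gs = pres_class RW [(s, True)]"
  define oneW where "oneW = pres_class RW []"
  have gs_c: "gs \<in> carrier (presented_group S RW)"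
    unfolding gs_def pres_carrier using s by (intro image_eqI[where x="[(s, True)]"]) auto
  have oneW_c: "oneW \<in> carrier (presented_group S RW)"
    unfolding oneW_def pres_carrier by (intro image_eqI[where x="[]"]) auto
  have mss: "m s s = enat 1" using assms(3) s by (simp add: coxeter_matrix_def one_enat_def)
  have rel: "[(s, True), (s, True)] \<in> RW"
    unfolding RW_def coxeter_relators_def using s mss
    by (intro CollectI exI[where x=s] exI[where x=s] exI[where x=1]) simp
  have "pres_step RW ([] @ []) ([] @ [(s, True), (s, True)] @ [])"
    by (rule pres_step.rel[OF rel])
  hence "pres_eq RW [(s, True), (s, True)] []" unfolding pres_eq_def by auto
  hence gg: "gs \<otimes>\<^bsub>presented_group S RW\<^esub> gs = oneW"
    by (simp add: gs_def oneW_def pres_mult pres_class_eq)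
  have "oneW \<otimes>\<^bsub>presented_group S RW\<^esub> oneW = oneW" by (simp add: oneW_def pres_mult)
  hence "\<sigma> oneW = \<sigma> oneW \<otimes>\<^bsub>presented_group Q RA\<^esub> \<sigma> oneW"
    using hom_mult[OF h\<sigma> oneW_c oneW_c] by simp
  hence "Ddeg (\<sigma> oneW) = Ddeg (\<sigma> oneW \<otimes>\<^bsub>presented_group Q RA\<^esub> \<sigma> oneW)" by simp
  hence D1: "Ddeg (\<sigma> oneW) = 0" using Ddeg_mult[OF dA] by simp
  have "\<sigma> oneW = \<sigma> gs \<otimes>\<^bsub>presented_group Q RA\<^esub> \<sigma> gs"
    using hom_mult[OF h\<sigma> gs_c gs_c] gg by simp
  hence "Ddeg (\<sigma> gs \<otimes>\<^bsub>presented_group Q RA\<^esub> \<sigma> gs) = 0" using D1 by simp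
  hence D2: "Ddeg (\<sigma> gs) = 0" using Ddeg_mult[OF dA] by simp
  have "\<sigma> gs \<in> carrier (presented_group Q RA)" using hom_in_carrier[OF h\<sigma> gs_c] .
  then obtain w where w: "w \<in> lists (Q \<times> UNIV)" "\<sigma> gs = pres_class RA w"
    by (auto simp: pres_carrier)
  have "wdeg w = 0" using D2 w Ddeg_class[OF dA] by simp
  hence "\<not> Epar (\<phi> (\<sigma> gs))" using link[OF w(1)] w(2) by simp
  moreover have "Epar (\<phi> (\<sigma> gs))" using sec'[OF gs_c]
    by (simp add: gs_def Epar_class[OF evW])
  ultimately show False by contradiction
qed

end
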